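(* Let $n\ge0$ be an integer with $\chi_n>c^2$, and let $x_1$ be the minimal root of $\psi_n$ in $(1,\infty)$. Then $$x_1-\frac{\sqrt{\chi_n}}{c}>\frac{\pi}{2c}\qquad\text{and}\qquad\sqrt{\frac{x_1^2-1}{x_1^2-\chi_n/c^2}}<\frac{2}{\pi}\,c\Big(x_1-\frac{\sqrt{\chi_n}}{c}\Big).$$
   Context: For a real number $c>0$, let $\psi_0,\psi_1,\dots$ be the prolate spheroidal wave functions of band limit $c$: the real $L^2[-1,1]$-normalized eigenfunctions of $F_c[\varphi](x)=\int_{-1}^1\varphi(t)e^{icxt}\,dt$ with eigenvalues $\lambda_n$ ordered by $|\lambda_n|\ge|\lambda_{n+1}|$, extended to entire functions by $\lambda_n\psi_n(x)=\int_{-1}^1\psi_n(t)e^{icxt}\,dt$. $\chi_0<\chi_1<\dots$ are the positive numbers such that $\psi_n$ satisfies $(1-x^2)\psi''(x)-2x\psi'(x)+(\chi_n-c^2x^2)\psi(x)=0$ for all $x$. (Each $\psi_n$ has infinitely many roots in $(1,\infty)$.) *)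

theory Defs
  imports "HOL-Analysis.Analysis"
begin

text \<open>The prolate spheroidal wave functions of band limit c, as a sequence
  psi n (restricted to the real line), eigenvalues lam n of the integral
  operator F_c, and the Sturm-Liouville parameters chi n.\<close>

definition pswf_system ::
  "real \<Rightarrow> (nat \<Rightarrow> real \<Rightarrow> real) \<Rightarrow> (nat \<Rightarrow> complex) \<Rightarrow> (nat \<Rightarrow> real) \<Rightarrow> bool" where
  "pswf_system c psi lam chi \<longleftrightarrow>
     (\<forall>n. ((\<lambda>t. (psi n t)\<^sup>2) has_integral 1) {-1..1}) \<and>
     (\<forall>n m. n \<noteq> m \<longrightarrow> ((\<lambda>t. psi n t * psi m t) has_integral 0) {-1..1}) \<and>
     (\<forall>n x. ((\<lambda>t. complex_of_real (psi n t) * exp (\<i> * complex_of_real (c * x * t)))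
              has_integral (lam n * complex_of_real (psi n x))) {-1..1}) \<and>
     (\<forall>n. lam n \<noteq> 0) \<and>
     (\<forall>n. norm (lam (Suc n)) \<le> norm (lam n)) \<and>
     (\<forall>n. 0 < chi n \<and> chi n < chi (Suc n)) \<and>
     (\<forall>n x. psi n differentiable (at x) \<and> deriv (psi n) differentiable (at x)) \<and>
     (\<forall>n x. (1 - x\<^sup>2) * deriv (deriv (psi n)) x - 2 * x * deriv (psi n) x
              + (chi n - c\<^sup>2 * x\<^sup>2) * psi n x = 0)"

end

theory Submission
  imports Defs
begin

lemma main_lemma:
  fixes h h1 h2 :: "real \<Rightarrow> real" and c chi x1 :: real
  assumes c: "c > 0" and chi: "chi > c^2" and x1: "x1 > 1" and hx1: "h x1 = 0"
   and pos: "\<And>y. 1 < y \<Longrightarrow> y < x1 \<Longrightarrow> h y > 0"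
   and d1: "\<And>x. (h has_real_derivative h1 x) (at x)"
   and d2: "\<And>x. (h1 has_real_derivative h2 x) (at x)"
   and ode: "\<And>x. (1 - x^2) * h2 x - 2*x*h1 x + (chi - c^2*x^2) * h x = 0"
  shows "sqrt chi / c < x1 \<and> pi/2 < c * sqrt ((x1^2 - (sqrt chi / c)^2)/(x1^2-1)) * (x1 - sqrt chi / c)"
proof -
  define x0 where "x0 = sqrt chi / c"
  have chipos: "chi > 0" using chi c by (smt (verit) zero_less_power)
  have chi0: "chi = c^2 * x0^2" using c chipos by (simp add: x0_def power_divide)
  have "sqrt chi > sqrt (c^2)" using chi by (simp only: real_sqrt_less_iff)
  hence x0gt: "x0 > 1" using c by (simp add: x0_def)
  have below: "c^2*z^2 < chi" if "0 < z" "z < x0" for z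
  proof -
    have "z^2 < x0^2" using that by (simp add: power_strict_mono)
    thus ?thesis unfolding chi0 using c by simp
  qed
  have above: "chi < c^2*z^2" if "x0 < z" for z
  proof -
    have "x0^2 < z^2" using that x0gt by (simp add: power_strict_mono)
    thus ?thesis unfolding chi0 using c by simp
  qed
  have sq1: "x^2 - 1 > 0" if "1 < x" for x :: real
    using that one_less_power[of x 2] by simp
  define g where "g x = (x^2-1) * h1 x" for x
  have dg: "(g has_real_derivative (chi - c^2*x^2) * h x) (at x)" for x
  proof -
    have "(g has_real_derivative (2*x) * h1 x + (x^2-1) * h2 x) (at x)"
      unfolding g_def[abs_def] by (auto intro!: derivative_eq_intros d2)
    moreover have "(2*x) * h1 x + (x^2-1)*h2 x = (chi - c^2*x^2)*h x"
      using ode[of x] by (simp add: algebra_simps)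
    ultimately show ?thesis by simp
  qed
  have g1: "g 1 = 0" by (simp add: g_def)
  have gpos: "g x > 0" if A: "1 < x" "x \<le> x1" "x \<le> x0" for x
  proof -
    obtain z where z: "1<z" "z<x" "g x - g 1 = (x-1) * ((chi - c^2*z^2)*h z)"
      using MVT2[of 1 x g "\<lambda>z. (chi - c^2*z^2)*h z"] dg A by auto
    have "c^2*z^2 < chi" using below[of z] z that by auto
    moreover have "h z > 0" using pos[of z] z that by auto
    ultimately show ?thesis using z g1 that by simp
  qed
  have x01: "x0 < x1"
  proof (rule ccontr)
    assume "\<not> x0 < x1" hence le: "x1 \<le> x0" by simp
    define y where "y = (1+x1)/2"
    obtain z where z: "y<z" "z<x1" "h x1 - h y = (x1-y) * h1 z"
      using MVT2[of y x1 h h1] d1 x1 by (auto simp: y_def)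
    have "g z > 0" using gpos[of z] z le x1 by (auto simp: y_def)
    moreover have "z^2 - 1 > 0" using sq1[of z] z x1 by (simp add: y_def)
    ultimately have "h1 z > 0" by (simp add: g_def zero_less_mult_iff)
    moreover have "h y > 0" using pos[of y] x1 by (auto simp: y_def)
    ultimately show False using z hx1 by (smt (verit) mult_pos_pos)
  qed
  have gx0: "g x0 > 0" using gpos[of x0] x0gt x01 by simp
  have gdec: "g b < g a" if A: "x0 \<le> a" "a < b" "b \<le> x1" for a b
  proof -
    obtain z where z: "a<z" "z<b" "g b - g a = (b-a) * ((chi - c^2*z^2)*h z)"
      using MVT2[of a b g "\<lambda>z. (chi - c^2*z^2)*h z"] dg A by auto
    have "chi < c^2*z^2" using above[of z] z that by auto
    moreover have "h z > 0" using pos[of z] z that x0gt by auto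
    ultimately have "(chi - c^2*z^2)*h z < 0" by (simp add: mult_neg_pos)
    thus ?thesis using z that by (smt (verit) mult_pos_neg)
  qed
  obtain xi where xi: "x0<xi" "xi<x1" "h x1 - h x0 = (x1-x0) * h1 xi"
    using MVT2[of x0 x1 h h1] d1 x01 by auto
  have "h x0 > 0" using pos x0gt x01 by auto
  hence "(x1-x0) * h1 xi < 0" using xi hx1 by simp
  hence "h1 xi < 0" using x01 by (simp add: mult_less_0_iff)
  moreover have "1 < xi" using xi x0gt by simp
  ultimately have gxi: "g xi < 0" using sq1[of xi] by (simp add: g_def mult_pos_neg)
  have gcont: "isCont g x" for x using dg DERIV_isCont by blast
  obtain m where m: "x0 \<le> m" "m \<le> xi" "g m = 0"
    using IVT2[of g xi 0 x0] gxi gx0 xi gcont by auto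
  have mx: "x0 < m" "m < xi" using m gxi gx0 by (auto simp: order.order_iff_strict)
  have m1: "1 < m" using mx x0gt by simp
  have h1m: "h1 m = 0" using m sq1[OF m1] by (simp add: g_def)
  have h1neg: "h1 x < 0" if "m < x" "x \<le> x1" for x
  proof -
    have "g x < 0" using gdec[of m x] that m mx by simp
    moreover have "x^2 - 1 > 0" using that m1 sq1[of x] by simp
    ultimately show ?thesis by (simp add: g_def mult_less_0_iff)
  qed
  define r where "r = (x1^2 - x0^2)/(x1^2-1)"
  have x1sq: "x1^2 > 1" using sq1[of x1] x1 by simp
  have x0sq: "x0^2 > 1" using sq1[of x0] x0gt by simp
  have x10sq: "x1^2 > x0^2" using x01 x0gt by (simp add: power_strict_mono)
  have rpos: "r > 0" using x1sq x10sq by (simp add: r_def)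
  define F where "F = c * sqrt r"
  have Fpos: "F > 0" using c rpos by (simp add: F_def)
  have F2: "F^2 = c^2 * r" using rpos by (simp add: F_def power_mult_distrib)
  have key: "chi - c^2*x^2 + F^2*(x^2-1) > 0" if "1 < x" "x < x1" for x
  proof -
    have "r*(x^2-1) - (x^2-x0^2) = (x0^2-1)*(x1^2-x^2)/(x1^2-1)"
      using x1sq by (simp add: r_def field_simps)
    moreover have "x^2 < x1^2" using that by (simp add: power_strict_mono)
    ultimately have "r*(x^2-1) - (x^2-x0^2) > 0" using x0sq x1sq by simp
    hence "c^2 * (r*(x^2-1) - (x^2-x0^2)) > 0" using c by simp
    thus ?thesis unfolding F2 chi0 by (simp add: algebra_simps)
  qed
  have main: "pi/2 < F * (x1 - m)"
  proof (rule ccontr)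
    assume "\<not> pi/2 < F * (x1 - m)"
    hence L: "F * (x1 - m) \<le> pi/2" by simp
    define w where "w x = h1 x * cos (F*(x-m)) + h x * (F * sin (F*(x-m)))" for x
    have dw: "(w has_real_derivative (h2 x + F^2 * h x) * cos (F*(x-m))) (at x)" for x
    proof -
      have "(w has_real_derivative (h2 x * cos (F*(x-m)) + h1 x * (- sin (F*(x-m)) * (F*1))
             + (h1 x * (F * sin (F*(x-m))) + h x * (F * (cos (F*(x-m)) * (F * 1)))))) (at x)"
        unfolding w_def[abs_def] by (auto intro!: derivative_eq_intros d1 d2)
      thus ?thesis by (simp add: algebra_simps power2_eq_square)
    qed
    have xm: "m < x1" using mx xi by simp
    obtain z where z: "m<z" "z<x1" "w x1 - w m = (x1-m) * ((h2 z + F^2 * h z) * cos (F*(z-m)))"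
      using MVT2[of m x1 w "\<lambda>x. (h2 x + F^2 * h x) * cos (F*(x-m))"] dw xm by auto
    have wm: "w m = 0" using h1m by (simp add: w_def)
    have "F*(x1-m) > 0" using Fpos xm by simp
    hence "cos (F*(x1-m)) \<ge> 0" using L pi_gt_zero by (intro cos_ge_zero) linarith+
    hence wx1: "w x1 \<le> 0" using h1neg[of x1] xm hx1 by (simp add: w_def mult_nonpos_nonneg)
    have cz: "cos (F*(z-m)) > 0"
    proof (rule cos_gt_zero_pi)
      have "F*(z-m) > 0" using Fpos z by simp
      thus "- (pi/2) < F*(z-m)" using pi_gt_zero by linarith
      have "F*(z-m) < F*(x1-m)" using Fpos z by simp
      thus "F*(z-m) < pi/2" using L by simp
    qed
    have z1: "1 < z" using z mx x0gt by simp
    have hz: "h z > 0" using pos z1 z by simp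
    have h1z: "h1 z < 0" using h1neg z by simp
    have "(z^2-1) * (h2 z + F^2 * h z) = -2*z*h1 z + (chi - c^2*z^2 + F^2*(z^2-1)) * h z"
      using ode[of z] by (simp add: algebra_simps)
    also have "... > 0"
    proof -
      have "-2*z*h1 z > 0" using z1 h1z by (simp add: mult_neg_neg mult_pos_neg)
      moreover have "(chi - c^2*z^2 + F^2*(z^2-1)) * h z > 0" using key[of z] z1 z hz by simp
      ultimately show ?thesis by linarith
    qed
    finally have pp: "(z^2-1) * (h2 z + F^2 * h z) > 0" .
    have "z^2 - 1 > 0" using z1 sq1[of z] by simp
    hence "h2 z + F^2 * h z > 0" using pp by (simp add: zero_less_mult_iff)
    hence "w x1 - w m > 0" using z cz by simp
    thus False using wm wx1 by simp
  qed
  have "F * (x1 - m) < F * (x1 - x0)" using Fpos mx by simp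
  hence "pi/2 < F * (x1 - x0)" using main by simp
  thus ?thesis using x01 by (simp add: F_def r_def x0_def)
qed


lemma final_arith:
  fixes c chi x1 :: real
  assumes c: "c > 0" and chi: "chi > c^2" and x1: "x1 > 1"
    and A: "sqrt chi / c < x1 \<and> pi/2 < c * sqrt ((x1^2 - (sqrt chi / c)^2)/(x1^2-1)) * (x1 - sqrt chi / c)"
  shows "x1 - sqrt chi / c > pi / (2 * c) \<and>
         sqrt ((x1\<^sup>2 - 1) / (x1\<^sup>2 - chi / c\<^sup>2)) < 2 / pi * c * (x1 - sqrt chi / c)"
proof -
  define x0 where "x0 = sqrt chi / c"
  have chipos: "chi > 0" using chi c by (smt (verit) zero_less_power)
  have chi0: "chi / c^2 = x0^2" using c chipos by (simp add: x0_def power_divide)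
  have "sqrt chi > sqrt (c^2)" using chi by (simp only: real_sqrt_less_iff)
  hence x0gt: "x0 > 1" using c by (simp add: x0_def)
  have x01: "x0 < x1" using A by (simp add: x0_def)
  have x1sq: "x1^2 > 1" using x1 one_less_power[of x1 2] by simp
  have x10sq: "x1^2 > x0^2" using x01 x0gt by (simp add: power_strict_mono)
  have x0sq: "x0^2 > 1" using x0gt one_less_power[of x0 2] by simp
  define r where "r = (x1^2 - x0^2)/(x1^2-1)"
  have rpos: "r > 0" using x1sq x10sq by (simp add: r_def)
  have rlt: "r < 1" using x1sq x0sq by (simp add: r_def)
  have P: "pi/2 < c * sqrt r * (x1 - x0)" using A by (simp add: r_def x0_def)
  have sr: "0 < sqrt r" "sqrt r < 1" using rpos rlt by auto
  have d: "x1 - x0 > 0" using x01 by simp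
  have "c * sqrt r * (x1 - x0) < c * (x1 - x0)" using sr c d by simp
  hence "pi/2 < c * (x1 - x0)" using P by simp
  hence 1: "pi / (2*c) < x1 - x0" using c by (simp add: field_simps)
  have "(x1\<^sup>2 - 1) / (x1\<^sup>2 - chi / c\<^sup>2) = 1 / r" unfolding chi0 r_def by simp
  hence e: "sqrt ((x1\<^sup>2 - 1) / (x1\<^sup>2 - chi / c\<^sup>2)) = 1 / sqrt r" by (simp add: real_sqrt_divide)
  have "1 / sqrt r < 2 / pi * c * (x1 - x0)"
    using P sr pi_gt_zero by (simp add: field_simps)
  thus ?thesis using 1 e by (simp add: x0_def)
qed

theorem theorem31:
  fixes c :: real and psi :: "nat \<Rightarrow> real \<Rightarrow> real" and lam :: "nat \<Rightarrow> complex"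
    and chi :: "nat \<Rightarrow> real" and n :: nat and x1 :: real
  assumes "c > 0"
    and "pswf_system c psi lam chi"
    and "chi n > c\<^sup>2"
    and "x1 > 1" and "psi n x1 = 0"
    and "\<forall>y. 1 < y \<and> y < x1 \<longrightarrow> psi n y \<noteq> 0"
  shows "x1 - sqrt (chi n) / c > pi / (2 * c) \<and>
         sqrt ((x1\<^sup>2 - 1) / (x1\<^sup>2 - chi n / c\<^sup>2)) < 2 / pi * c * (x1 - sqrt (chi n) / c)"
proof -
  note sys = assms(2)[unfolded pswf_system_def]
  define f where "f = psi n"
  have df: "(f has_real_derivative deriv f x) (at x)" for x
    using sys by (simp add: f_def DERIV_deriv_iff_real_differentiable)
  have ddf: "(deriv f has_real_derivative deriv (deriv f) x) (at x)" for x
    using sys by (simp add: f_def DERIV_deriv_iff_real_differentiable)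
  have ode: "(1 - x\<^sup>2) * deriv (deriv f) x - 2 * x * deriv f x + (chi n - c\<^sup>2 * x\<^sup>2) * f x = 0" for x
    using sys by (simp add: f_def)
  have nz: "f y \<noteq> 0" if "1 < y" "y < x1" for y using assms(6) that by (simp add: f_def)
  have cont: "continuous_on S f" for S using df
    by (meson DERIV_isCont continuous_at_imp_continuous_on)
  define y0 where "y0 = (1 + x1) / 2"
  have y0: "1 < y0" "y0 < x1" using assms(4) by (auto simp: y0_def)
  define s :: real where "s = (if f y0 > 0 then 1 else -1)"
  have s2: "s * s = 1" by (simp add: s_def)
  have sy0: "s * f y0 > 0" using nz[OF y0] by (auto simp: s_def)
  have pos: "s * f y > 0" if y: "1 < y" "y < x1" for y
  proof (rule ccontr)
    assume "\<not> s * f y > 0"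
    hence le: "s * f y \<le> 0" by simp
    have cs: "continuous_on S (\<lambda>t. s * f t)" for S by (intro continuous_intros cont)
    obtain t where t: "min y y0 \<le> t" "t \<le> max y y0" "s * f t = 0"
    proof (cases "y \<le> y0")
      case True
      then show ?thesis using IVT'[of "\<lambda>t. s * f t" y 0 y0] le sy0 cs that by auto
    next
      case False
      then show ?thesis using IVT2'[of "\<lambda>t. s * f t" y 0 y0] le sy0 cs that by auto
    qed
    have "1 < t" "t < x1" using t y y0 by auto
    hence "f t \<noteq> 0" by (rule nz)
    moreover have "s \<noteq> 0" by (simp add: s_def)
    ultimately show False using t by simp
  qed
  have M: "sqrt (chi n) / c < x1 \<and> pi/2 < c * sqrt ((x1^2 - (sqrt (chi n) / c)^2)/(x1^2-1)) * (x1 - sqrt (chi n) / c)"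
  proof (rule main_lemma[of c "chi n" x1 "\<lambda>t. s * f t" "\<lambda>t. s * deriv f t" "\<lambda>t. s * deriv (deriv f) t"])
    show "c > 0" "c^2 < chi n" "1 < x1" using assms by auto
    show "s * f x1 = 0" using assms(5) by (simp add: f_def)
    show "\<And>y. 1 < y \<Longrightarrow> y < x1 \<Longrightarrow> 0 < s * f y" by (rule pos)
    show "\<And>x. ((\<lambda>t. s * f t) has_real_derivative s * deriv f x) (at x)"
      by (intro DERIV_cmult df)
    show "\<And>x. ((\<lambda>t. s * deriv f t) has_real_derivative s * deriv (deriv f) x) (at x)"
      by (intro DERIV_cmult ddf)
    fix x
    have "s * ((1 - x\<^sup>2) * deriv (deriv f) x - 2 * x * deriv f x + (chi n - c\<^sup>2 * x\<^sup>2) * f x) = 0"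
      using ode[of x] by simp
    thus "(1 - x^2) * (s * deriv (deriv f) x) - 2*x*(s * deriv f x) + (chi n - c^2*x^2) * (s * f x) = 0"
      by (simp add: algebra_simps)
  qed
  show ?thesis using final_arith[OF assms(1) assms(3) assms(4) M] .
qed

end
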